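(* Let $J\in M(n,\mathbb{R})$, $G=U(n)$, $G'=O(n)$, and let $L$ be a subgroup of $G$. Let $G_J:=\{g\in G: gJ=Jg\}$. If there exists $g\in G$ such that $\mathrm{Ad}(L)(\mathrm{Ad}(g)J)\cap M(n,\mathbb{R})=\emptyset$, then $LG'G_J\subsetneq G$.
   Context: $\mathrm{Ad}(g)J:=gJg^{-1}$ for $g\in U(n)$, and $\mathrm{Ad}(L)P:=\{\mathrm{Ad}(x)P:x\in L\}$. $LG'G_J=\{xyz:x\in L,y\in G',z\in G_J\}$. *)

theory Defs
  imports "HOL-Analysis.Analysis"
begin

definition adjoint_mat :: "complex^'n::finite^'n \<Rightarrow> complex^'n^'n" where
  "adjoint_mat A = transpose (map_matrix cnj A)"

definition unitary_group :: "(complex^'n::finite^'n) set" where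
  "unitary_group = {U. U ** adjoint_mat U = mat 1 \<and> adjoint_mat U ** U = mat 1}"

definition real_matrices :: "(complex^'n::finite^'n) set" where
  "real_matrices = {A. \<forall>i j. A $ i $ j \<in> \<real>}"

definition orthogonal_group :: "(complex^'n::finite^'n) set" where
  "orthogonal_group = map_matrix complex_of_real ` {Q :: real^'n^'n. orthogonal_matrix Q}"

definition Ad :: "complex^'n::finite^'n \<Rightarrow> complex^'n^'n \<Rightarrow> complex^'n^'n" where
  "Ad g A = g ** A ** matrix_inv g"

definition stabilizer_U :: "complex^'n::finite^'n \<Rightarrow> (complex^'n^'n) set" where
  "stabilizer_U J = {g \<in> unitary_group. g ** J = J ** g}"

definition subgroup_U :: "(complex^'n::finite^'n) set \<Rightarrow> bool" where
  "subgroup_U L \<longleftrightarrow> L \<subseteq> unitary_group \<and> mat 1 \<in> L \<and>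
     (\<forall>x\<in>L. \<forall>y\<in>L. x ** y \<in> L) \<and> (\<forall>x\<in>L. matrix_inv x \<in> L)"

end

theory Submission
  imports Defs
begin

lemma adj_mult: "adjoint_mat (A ** B) = adjoint_mat B ** adjoint_mat (A :: complex^'n::finite^'n)"
  by (simp add: adjoint_mat_def vec_eq_iff matrix_matrix_mult_def transpose_def map_matrix_def mult.commute)

lemma adj_adj: "adjoint_mat (adjoint_mat (A :: complex^'n::finite^'n)) = A"
  by (simp add: adjoint_mat_def vec_eq_iff transpose_def map_matrix_def)

lemma adj_one: "adjoint_mat (mat 1 :: complex^'n::finite^'n) = mat 1"
  by (simp add: adjoint_mat_def vec_eq_iff transpose_def map_matrix_def mat_def)

lemma unitary_inv:
  assumes "U \<in> unitary_group"
  shows "matrix_inv U = adjoint_mat (U :: complex^'n::finite^'n)"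
proof -
  have u: "U ** adjoint_mat U = mat 1" "adjoint_mat U ** U = mat 1"
    using assms by (auto simp: unitary_group_def)
  have "U ** matrix_inv U = mat 1 \<and> matrix_inv U ** U = mat 1"
    unfolding matrix_inv_def by (rule someI[where x="adjoint_mat U"]) (use u in auto)
  hence "adjoint_mat U ** (U ** matrix_inv U) = adjoint_mat U" by simp
  thus ?thesis by (simp add: matrix_mul_assoc u)
qed

lemma unitary_mult:
  assumes "A \<in> unitary_group" "B \<in> unitary_group"
  shows "A ** B \<in> (unitary_group :: (complex^'n::finite^'n) set)"
proof -
  have a: "A ** adjoint_mat A = mat 1" "adjoint_mat A ** A = mat 1"
   and b: "B ** adjoint_mat B = mat 1" "adjoint_mat B ** B = mat 1"
    using assms by (auto simp: unitary_group_def)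
  have "A ** B ** adjoint_mat (A ** B) = A ** (B ** adjoint_mat B) ** adjoint_mat A"
    by (simp add: adj_mult matrix_mul_assoc)
  also have "\<dots> = mat 1" using a b by simp
  finally have 1: "A ** B ** adjoint_mat (A ** B) = mat 1" .
  have "adjoint_mat (A ** B) ** (A ** B) = adjoint_mat B ** (adjoint_mat A ** A) ** B"
    by (simp add: adj_mult matrix_mul_assoc)
  also have "\<dots> = mat 1" using a b by simp
  finally show ?thesis using 1 by (simp add: unitary_group_def)
qed

lemma unitary_adj:
  assumes "A \<in> unitary_group"
  shows "adjoint_mat A \<in> (unitary_group :: (complex^'n::finite^'n) set)"
  using assms by (auto simp: unitary_group_def adj_adj)

lemma of_real_mult:
  "map_matrix complex_of_real (A ** B) = map_matrix complex_of_real A ** map_matrix complex_of_real (B :: real^'n::finite^'n)"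
  by (simp add: vec_eq_iff matrix_matrix_mult_def map_matrix_def)

lemma of_real_adj:
  "adjoint_mat (map_matrix complex_of_real (A :: real^'n::finite^'n)) = map_matrix complex_of_real (transpose A)"
  by (simp add: adjoint_mat_def vec_eq_iff transpose_def map_matrix_def)

lemma of_real_one:
  "map_matrix complex_of_real (mat 1 :: real^'n::finite^'n) = mat 1"
  by (simp add: vec_eq_iff map_matrix_def mat_def)

lemma orth_unitary:
  assumes "orthogonal_matrix (Q :: real^'n::finite^'n)"
  shows "map_matrix complex_of_real Q \<in> unitary_group"
  using assms unfolding unitary_group_def orthogonal_matrix_def
  by (simp add: of_real_adj flip: of_real_mult of_real_one)

lemma of_real_real: "map_matrix complex_of_real (A :: real^'n::finite^'n) \<in> real_matrices"
  by (simp add: real_matrices_def)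

theorem lemma6p1:
  fixes J0 :: "real^'n::finite^'n"
    and L :: "(complex^'n^'n) set"
  defines "J \<equiv> map_matrix complex_of_real J0"
  assumes "subgroup_U L"
    and "\<exists>g\<in>unitary_group. (\<lambda>x. Ad x (Ad g J)) ` L \<inter> real_matrices = {}"
  shows "{x ** y ** z | x y z. x \<in> L \<and> y \<in> orthogonal_group \<and> z \<in> stabilizer_U J}
           \<subset> unitary_group"
proof -
  have LU: "L \<subseteq> unitary_group" and Linv: "\<forall>x\<in>L. matrix_inv x \<in> L"
    using assms(2) by (auto simp: subgroup_U_def)
  have OU: "orthogonal_group \<subseteq> (unitary_group :: (complex^'n^'n) set)"
    by (auto simp: orthogonal_group_def orth_unitary)
  have SU: "stabilizer_U J \<subseteq> unitary_group" by (auto simp: stabilizer_U_def)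
  have sub: "{x ** y ** z | x y z. x \<in> L \<and> y \<in> orthogonal_group \<and> z \<in> stabilizer_U J}
           \<subseteq> unitary_group"
    using LU OU SU by (auto intro!: unitary_mult)
  obtain g where g: "g \<in> unitary_group" and dis: "(\<lambda>x. Ad x (Ad g J)) ` L \<inter> real_matrices = {}"
    using assms(3) by blast
  have "g \<notin> {x ** y ** z | x y z. x \<in> L \<and> y \<in> orthogonal_group \<and> z \<in> stabilizer_U J}"
  proof
    assume "g \<in> {x ** y ** z | x y z. x \<in> L \<and> y \<in> orthogonal_group \<and> z \<in> stabilizer_U J}"
    then obtain x y z where gx: "g = x ** y ** z" and x: "x \<in> L" and y: "y \<in> orthogonal_group"
      and z: "z \<in> stabilizer_U J" by blast
    obtain Q where Q: "orthogonal_matrix Q" and yQ: "y = map_matrix complex_of_real Q"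
      using y by (auto simp: orthogonal_group_def)
    have xu: "x \<in> unitary_group" using x LU by auto
    have zu: "z \<in> unitary_group" and zJ: "z ** J = J ** z" using z by (auto simp: stabilizer_U_def)
    have yu: "y \<in> unitary_group" using Q yQ orth_unitary by simp
    have xa: "adjoint_mat x ** x = mat 1" using xu by (simp add: unitary_group_def)
    have za: "z ** adjoint_mat z = mat 1" using zu by (simp add: unitary_group_def)
    have mi: "matrix_inv x \<in> L" using Linv x by auto
    have "Ad (matrix_inv x) (Ad g J)
        = adjoint_mat x ** (x ** y ** z ** J ** (adjoint_mat z ** adjoint_mat y ** adjoint_mat x)) ** x"
      unfolding Ad_def
      using unitary_inv[OF xu] unitary_inv[OF unitary_adj[OF xu]] unitary_inv[OF g]
      by (simp add: gx adj_mult adj_adj matrix_mul_assoc)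
    also have "\<dots> = (adjoint_mat x ** x) ** y ** (z ** J ** adjoint_mat z) ** adjoint_mat y ** (adjoint_mat x ** x)"
      by (simp add: matrix_mul_assoc)
    also have "z ** J ** adjoint_mat z = J" using za zJ by (simp flip: matrix_mul_assoc)
    also have "(adjoint_mat x ** x) ** y ** J ** adjoint_mat y ** (adjoint_mat x ** x)
        = map_matrix complex_of_real (Q ** J0 ** transpose Q)"
      by (simp add: xa yQ J_def of_real_mult of_real_adj)
    finally have "Ad (matrix_inv x) (Ad g J) \<in> real_matrices" by (simp add: of_real_real)
    thus False using dis mi by blast
  qed
  with sub g show ?thesis by blast
qed

end
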